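(* Let $D=\{d_1<d_2<d_3<\dotsb\}$ be an infinite set of positive integers. If there exist a real number $\delta>0$ and a positive integer $N$ such that $d_{n+1}\geq(3+\delta)d_n$ for all $n\geq N$, then $D$ is not $2$-accessible.
   Context: An $r$-coloring of a set $A$ is a function $\chi:A\to\{1,\dots,r\}$. For $D\subseteq\mathbb{N}=\{1,2,3,\dots\}$, a $k$-term $D$-diffsequence is a sequence of integers $x_1,\dots,x_k$ with $x_{i+1}-x_i\in D$ for all $1\le i\le k-1$. A set $D\subseteq\mathbb{N}$ is $r$-accessible if for every $r$-coloring of $\mathbb{N}$ and every $k\ge1$ there is a monochromatic $k$-term $D$-diffsequence in $\mathbb{N}$. *)

theory Defs
  imports "HOL-Analysis.Analysis"
begin

definition r_coloring :: "nat \<Rightarrow> (nat \<Rightarrow> nat) \<Rightarrow> bool" where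
  "r_coloring r c \<longleftrightarrow> (\<forall>x. x \<ge> 1 \<longrightarrow> c x \<in> {1..r})"

definition diffseq :: "nat set \<Rightarrow> nat \<Rightarrow> (nat \<Rightarrow> nat) \<Rightarrow> bool" where
  "diffseq D k x \<longleftrightarrow> (\<forall>i<k. x i \<ge> 1) \<and>
     (\<forall>i. Suc i < k \<longrightarrow> (\<exists>d\<in>D. int (x (Suc i)) - int (x i) = int d))"

definition monochromatic :: "(nat \<Rightarrow> nat) \<Rightarrow> nat \<Rightarrow> (nat \<Rightarrow> nat) \<Rightarrow> bool" where
  "monochromatic c k x \<longleftrightarrow> (\<forall>i<k. c (x i) = c (x 0))"

definition r_accessible :: "nat \<Rightarrow> nat set \<Rightarrow> bool" where
  "r_accessible r D \<longleftrightarrow>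
     (\<forall>c. r_coloring r c \<longrightarrow>
        (\<forall>k\<ge>1. \<exists>x. diffseq D k x \<and> monochromatic c k x))"

end

theory Submission
  imports Defs
begin

lemma nested:
  fixes f :: "nat \<Rightarrow> nat" and l c :: real
  assumes pos: "\<And>k. f k > 0" and ratio: "\<And>k. (1+l) * real (f k) \<le> l * real (f (Suc k))"
    and lpos: "l > 0"
  shows "\<exists>\<alpha>::real. (\<forall>k. \<exists>m::int. m + c \<le> \<alpha> * f k \<and> \<alpha> * f k \<le> m + c + l)
            \<and> c / f 0 \<le> \<alpha> \<and> \<alpha> \<le> (c + l) / f 0"
proof -
  define m where "m = rec_nat (0::int) (\<lambda>k mk. \<lceil>(mk + c) * f (Suc k) / f k - c\<rceil>)"
  have m0: "m 0 = 0" by (simp add: m_def)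
  have mS: "m (Suc k) = \<lceil>(m k + c) * f (Suc k) / f k - c\<rceil>" for k by (simp add: m_def)
  define a where "a k = (m k + c) / f k" for k
  define b where "b k = (m k + c + l) / f k" for k
  have ab: "a k \<le> b k" for k using pos[of k] lpos by (simp add: a_def b_def divide_right_mono)
  have step: "a k \<le> a (Suc k) \<and> b (Suc k) \<le> b k" for k
  proof -
    define F where "F = real (f k)"
    define F' where "F' = real (f (Suc k))"
    define M where "M = real_of_int (m k)"
    define M' where "M' = real_of_int (m (Suc k))"
    have F: "F > 0" using pos[of k] by (simp add: F_def)
    have F': "F' > 0" using pos[of "Suc k"] by (simp add: F'_def)
    have r: "(1+l) * F \<le> l * F'" using ratio[of k] by (simp add: F_def F'_def)
    have e: "M' = of_int \<lceil>(M + c) * F' / F - c\<rceil>" using mS[of k] by (simp add: M'_def M_def F_def F'_def)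
    have lo: "M' \<ge> (M + c) * F' / F - c" using e by linarith
    have hi: "M' < (M + c) * F' / F - c + 1" using e by linarith
    have lo2: "(M + c) * F' \<le> (M' + c) * F" using lo F by (simp add: field_simps)
    have hi2: "(M' + c) * F < (M + c) * F' + F" using hi F by (simp add: field_simps)
    have "a k = (M + c) / F" by (simp add: a_def M_def F_def)
    moreover have "a (Suc k) = (M' + c) / F'" by (simp add: a_def M'_def F'_def)
    moreover have "b k = (M + c + l) / F" by (simp add: b_def M_def F_def)
    moreover have "b (Suc k) = (M' + c + l) / F'" by (simp add: b_def M'_def F'_def)
    moreover have "(M + c) / F \<le> (M' + c) / F'" using lo2 F F' by (simp add: field_simps)
    moreover have "(M' + c + l) / F' \<le> (M + c + l) / F"
    proof -
      have "(M' + c + l) * F = (M'+c)*F + l * F" by (simp add: algebra_simps)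
      also have "\<dots> \<le> (M + c) * F' + F + l * F" using hi2 by linarith
      also have "\<dots> \<le> (M + c) * F' + l * F'" using r by (simp add: algebra_simps)
      also have "\<dots> = (M + c + l) * F'" by (simp add: algebra_simps)
      finally show ?thesis using F F' by (simp add: field_simps)
    qed
    ultimately show ?thesis by simp
  qed
  have inc: "incseq a" by (rule incseq_SucI) (use step in auto)
  have dec: "decseq b" by (rule decseq_SucI) (use step in auto)
  have bnd: "\<forall>i. a i \<le> b 0"
  proof
    fix i show "a i \<le> b 0" using ab[of i] decseqD[OF dec, of 0 i] by linarith
  qed
  obtain \<alpha> where lim: "a \<longlonglongrightarrow> \<alpha>" and ale: "\<forall>i. a i \<le> \<alpha>"
    using incseq_convergent[OF inc bnd] by blast
  have ble: "\<alpha> \<le> b k" for k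
  proof (rule LIMSEQ_le_const2[OF lim])
    show "\<exists>N. \<forall>n\<ge>N. a n \<le> b k"
      by (rule exI[of _ k]) (meson ab dec decseqD order_trans)
  qed
  have "\<forall>k. \<exists>mm::int. mm + c \<le> \<alpha> * f k \<and> \<alpha> * f k \<le> mm + c + l"
  proof
    fix k
    have F: "real (f k) > 0" using pos[of k] by simp
    have "m k + c \<le> \<alpha> * f k" using ale[rule_format, of k] F by (simp add: a_def field_simps)
    moreover have "\<alpha> * f k \<le> m k + c + l" using ble[of k] F by (simp add: b_def field_simps)
    ultimately show "\<exists>mm::int. mm + c \<le> \<alpha> * f k \<and> \<alpha> * f k \<le> mm + c + l" by blast
  qed
  moreover have "c / f 0 \<le> \<alpha>" using ale[rule_format, of 0] by (simp add: a_def m0)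
  moreover have "\<alpha> \<le> (c + l) / f 0" using ble[of 0] by (simp add: b_def m0)
  ultimately show ?thesis by blast
qed

theorem mainTheorem2:
  fixes D :: "nat set"
  assumes "D \<subseteq> {1..}" and "infinite D"
    and "\<exists>(\<delta>::real) > 0. \<exists>N::nat. \<forall>n\<ge>N.
           real (enumerate D (Suc n)) \<ge> (3 + \<delta>) * real (enumerate D n)"
  shows "\<not> r_accessible 2 D"
proof
  assume acc: "r_accessible 2 D"
  obtain \<delta> :: real and N where dpos: "\<delta> > 0"
    and rat: "\<forall>n\<ge>N. real (enumerate D (Suc n)) \<ge> (3 + \<delta>) * real (enumerate D n)"
    using assms(3) by blast
  define f where "f k = enumerate D (N + k)" for k
  define l :: real where "l = 1 / (2 + \<delta>)"
  define c :: real where "c = (1/2 - l) / 2"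
  have lpos: "l > 0" and lhalf: "l < 1/2" using dpos by (simp_all add: l_def field_simps)
  have cpos: "c > 0" using lhalf by (simp add: c_def)
  have cl: "c + l < 1/2" using lhalf by (simp add: c_def field_simps)
  have inD: "enumerate D n \<in> D" for n using enumerate_in_set[OF assms(2)] .
  have pos: "f k > 0" for k using inD[of "N+k"] assms(1) by (auto simp: f_def)
  have ratio: "(1+l) * real (f k) \<le> l * real (f (Suc k))" for k
  proof -
    have "real (f (Suc k)) \<ge> (3 + \<delta>) * real (f k)" using rat[rule_format, of "N+k"] by (simp add: f_def)
    hence "l * real (f (Suc k)) \<ge> l * ((3 + \<delta>) * real (f k))" using lpos by (simp add: mult_left_mono)
    moreover have "l * (3 + \<delta>) = 1 + l" using dpos by (simp add: l_def field_simps)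
    ultimately show ?thesis by (metis mult.assoc)
  qed
  obtain \<alpha> :: real where A1: "\<forall>k. \<exists>m::int. m + c \<le> \<alpha> * f k \<and> \<alpha> * f k \<le> m + c + l"
     and A2: "c / f 0 \<le> \<alpha>" and A3: "\<alpha> \<le> (c + l) / f 0"
    using nested[of f l c, OF pos ratio lpos] by blast
  define e0 where "e0 = c / f 0"
  have f0: "real (f 0) \<ge> 1" using pos[of 0] by simp
  have e0pos: "e0 > 0" using cpos pos[of 0] by (simp add: e0_def)
  have e0c: "e0 \<le> c" using cpos f0 by (simp add: e0_def field_simps)
  have fracD: "e0 \<le> frac (\<alpha> * d) \<and> frac (\<alpha> * d) < 1/2" if dD0: "d \<in> D" for d
  proof (cases "d \<ge> f 0")
    case True
    obtain n where n: "enumerate D n = d" using enumerate_Ex[OF assms(2) dD0] by blast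
    have "n \<ge> N"
    proof (rule ccontr)
      assume "\<not> n \<ge> N"
      hence "enumerate D n < enumerate D N" using enumerate_mono[OF _ assms(2)] by simp
      thus False using True n by (simp add: f_def)
    qed
    then have fd: "f (n - N) = d" using n by (simp add: f_def)
    obtain m :: int where m: "m + c \<le> \<alpha> * d" "\<alpha> * d \<le> m + c + l" using A1 fd by metis
    have "frac (\<alpha> * d) = \<alpha> * d - m"
      unfolding frac_unique_iff using m cpos cl by (auto simp: Ints_of_int)
    thus ?thesis using m e0c cl by simp
  next
    case False
    have d1: "real d \<ge> 1" using dD0 assms(1) by auto
    have dlt: "real d < real (f 0)" using False by simp
    have "\<alpha> * d \<ge> c / f 0 * 1" using A2 d1 e0pos by (intro mult_mono) (auto simp: e0_def)
    moreover have "\<alpha> * d \<le> (c + l) / f 0 * d" using mult_right_mono[OF A3, of "real d"] by simp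
    moreover have "(c + l) / f 0 * d < c + l"
    proof -
      have "(c + l) * d < (c + l) * f 0" using dlt cpos lpos by (intro mult_strict_left_mono) auto
      thus ?thesis using f0 by (simp add: field_simps)
    qed
    ultimately have h1: "e0 \<le> \<alpha> * d" and h2: "\<alpha> * d < 1/2" using cl by (auto simp: e0_def)
    have "frac (\<alpha> * d) = \<alpha> * d" using h1 h2 e0pos by (simp add: frac_eq)
    then show ?thesis using h1 h2 by simp
  qed
  define col where "col x = (if frac (\<alpha> * real x) < 1/2 then 1 else 2::nat)" for x
  have "r_coloring 2 col" by (simp add: r_coloring_def col_def)
  define K where "K = nat \<lceil>1 / e0\<rceil> + 2"
  obtain x where ds: "diffseq D K x" and mono: "monochromatic col K x"
  proof -
    have "K \<ge> 1" by (simp add: K_def)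
    then show ?thesis using acc \<open>r_coloring 2 col\<close> that unfolding r_accessible_def by blast
  qed
  have claim: "i < K \<longrightarrow> frac (\<alpha> * x i) \<ge> i * e0" for i
  proof (induction i)
    case 0 then show ?case by simp
  next
    case (Suc i)
    show ?case
    proof
      assume iK: "Suc i < K"
      have IH: "frac (\<alpha> * x i) \<ge> i * e0" using Suc iK by simp
      obtain d where dD: "d \<in> D" and dd: "int (x (Suc i)) - int (x i) = int d"
        using ds iK unfolding diffseq_def by blast
      have xs: "real (x (Suc i)) = real (x i) + real d" using dd by linarith
      have cc: "col (x (Suc i)) = col (x i)" proof -
        have "col (x (Suc i)) = col (x 0)" "col (x i) = col (x 0)"
          using mono iK unfolding monochromatic_def by (meson Suc_lessD)+
        thus ?thesis by simp
      qed
      define u where "u = frac (\<alpha> * x i)"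
      define t where "t = frac (\<alpha> * d)"
      have t: "e0 \<le> t" "t < 1/2" using fracD[OF dD] unfolding t_def by auto
      have u: "0 \<le> u" "u < 1" unfolding u_def by (rule frac_ge_0, rule frac_lt_1)
      have fe: "frac (\<alpha> * x (Suc i)) = (if u + t < 1 then u + t else u + t - 1)"
        using frac_add[of "\<alpha> * x i" "\<alpha> * d"] xs by (simp add: u_def t_def distrib_left)
      have "frac (\<alpha> * x (Suc i)) = u + t"
      proof (cases "u + t < 1")
        case True then show ?thesis using fe by simp
      next
        case False
        hence "frac (\<alpha> * x (Suc i)) < 1/2" using fe t u by simp
        moreover have "u \<ge> 1/2" using False t by simp
        ultimately show ?thesis using cc by (simp add: col_def u_def)
      qed
      thus "frac (\<alpha> * x (Suc i)) \<ge> Suc i * e0" using IH t by (simp add: u_def algebra_simps)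
    qed
  qed
  have "K - 1 < K" by (simp add: K_def)
  hence "frac (\<alpha> * x (K - 1)) \<ge> (K - 1) * e0" using claim by blast
  moreover have "real (K - 1) * e0 > 1"
  proof -
    have "real (K - 1) = real (nat \<lceil>1 / e0\<rceil>) + 1" by (simp add: K_def)
    also have "\<dots> > 1 / e0" by linarith
    finally have "1 / e0 < real (K - 1)" .
    hence "1 / e0 * e0 < real (K - 1) * e0" using e0pos by (rule mult_strict_right_mono)
    moreover have "1 / e0 * e0 = 1" using e0pos by simp
    ultimately show ?thesis by linarith
  qed
  ultimately show False using frac_lt_1[of "\<alpha> * x (K - 1)"] by linarith
qed

end
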